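(* Consider the hidden Markov model and the procedure $\texttt{VRSO-PE}$ described in the context. Let $\boldsymbol{\phi}^{(0)}\in\boldsymbol{\Phi}$ and let input quantities $\{\widehat{\boldsymbol{\alpha}}^{(0)}_t,\widehat{\boldsymbol{\beta}}^{(0)}_t,\widehat{\boldsymbol{\gamma}}^{(0)}_t,\widehat{\boldsymbol{\xi}}^{(0)}_t\}_{t=1}^T$ be given. Suppose that (1) $\widehat{\boldsymbol{\alpha}}^{(0)}_t=\boldsymbol{\alpha}_t(\boldsymbol{\phi}^{(0)})$ and $\widehat{\boldsymbol{\beta}}^{(0)}_t=\boldsymbol{\beta}_t(\boldsymbol{\phi}^{(0)})$ for all $t=1,\ldots,T$; (2) $\widehat{\boldsymbol{\gamma}}^{(0)}_t=\boldsymbol{\gamma}_t(\boldsymbol{\phi}^{(0)})$ and $\widehat{\boldsymbol{\xi}}^{(0)}_t=\boldsymbol{\xi}_t(\boldsymbol{\phi}^{(0)})$ for all $t=1,\ldots,T$; (3) $\nabla F\big(\boldsymbol{\phi}^{(0)}\mid \boldsymbol{\gamma}(\boldsymbol{\phi}^{(0)}),\boldsymbol{\xi}(\boldsymbol{\phi}^{(0)})\big)=0$. Then, with probability 1, $$\texttt{VRSO-PE}\Big(\{\widehat{\boldsymbol{\alpha}}^{(0)}_t,\widehat{\boldsymbol{\beta}}^{(0)}_t,\widehat{\boldsymbol{\gamma}}^{(0)}_t,\widehat{\boldsymbol{\xi}}^{(0)}_t\}_{t=1}^T,\ \boldsymbol{\phi}^{(0)},\ \lambda,\ A,\ P,\ M\Big)=\boldsymbol{\phi}^{(0)}$$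 for all step sizes $\lambda\in\mathbb{R}$, all $A\in\{\mathrm{SAGA},\mathrm{SVRG}\}$, all $P\in\{\texttt{True},\texttt{False}\}$ and all $M\in\mathbb{N}$.
   Context: Setting (hidden Markov model). Observations $\mathbf{y}=(y_1,\ldots,y_T)$; $N$ hidden states; parameter $\boldsymbol{\phi}=(\boldsymbol{\theta},\boldsymbol{\eta})\in\boldsymbol{\Phi}$. The initial distribution is a row vector $\boldsymbol{\delta}(\boldsymbol{\eta})$, the transition matrix is $\boldsymbol{\Gamma}(\boldsymbol{\eta})$ (entries $\Gamma_{ij}$), and $P(y;\boldsymbol{\theta})=\mathrm{diag}\big(f^{(1)}(y;\boldsymbol{\theta}),\ldots,f^{(N)}(y;\boldsymbol{\theta})\big)$ collects the state-dependent emission densities; all these are positive and differentiable in $\boldsymbol{\phi}$. Forward/backward quantities (row vectors): $\boldsymbol{\alpha}_1(\boldsymbol{\phi})=\boldsymbol{\delta}(\boldsymbol{\eta})P(y_1;\boldsymbol{\theta})$, $\boldsymbol{\alpha}_t(\boldsymbol{\phi})=\boldsymbol{\alpha}_{t-1}(\boldsymbol{\phi})\boldsymbol{\Gamma}(\boldsymbol{\eta})P(y_t;\boldsymbol{\theta})$ for $t\ge 2$; $\boldsymbol{\beta}_T(\boldsymbol{\phi})=\mathbf{1}$, $\boldsymbol{\beta}_t(\boldsymbol{\phi})^\top=\boldsymbol{\Gamma}(\boldsymbol{\eta})P(y_{t+1};\boldsymbol{\theta})\boldsymbol{\beta}_{t+1}(\boldsymbol{\phi})^\top$ for $t<T$.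 Write $\widetilde{\boldsymbol{\alpha}}_t(\mathbf{a},\boldsymbol{\phi})$ for the map $\boldsymbol{\delta}(\boldsymbol{\eta})P(y_1;\boldsymbol{\theta})$ if $t=1$ and $\mathbf{a}\boldsymbol{\Gamma}(\boldsymbol{\eta})P(y_t;\boldsymbol{\theta})$ if $t\ge2$ (so $\widetilde{\boldsymbol{\alpha}}_t(\boldsymbol{\alpha}_{t-1}(\boldsymbol{\phi}),\boldsymbol{\phi})=\boldsymbol{\alpha}_t(\boldsymbol{\phi})$), and analogously $\widetilde{\boldsymbol{\beta}}_t(\mathbf{b},\boldsymbol{\phi})$ equal to $\mathbf{1}$ if $t=T$ and $(\boldsymbol{\Gamma}(\boldsymbol{\eta})P(y_{t+1};\boldsymbol{\theta})\mathbf{b}^\top)^\top$ if $t<T$. Conditional probabilities: $\widetilde{\boldsymbol{\gamma}}_t(\mathbf{a},\mathbf{b})=(\mathbf{a}\circ\mathbf{b})/(\mathbf{a}\mathbf{b}^\top)$ and, for $t\ge2$, $\widetilde{\boldsymbol{\xi}}_t(\mathbf{a}',\mathbf{b},\boldsymbol{\phi})=\mathrm{diag}(\mathbf{a}')\boldsymbol{\Gamma}(\boldsymbol{\eta})P(y_t;\boldsymbol{\theta})\mathrm{diag}(\mathbf{b})\big/\big(\mathbf{a}'\boldsymbol{\Gamma}(\boldsymbol{\eta})P(y_t;\boldsymbol{\theta})\mathbf{b}^\top\big)$; set $\boldsymbol{\gamma}_t(\boldsymbol{\phi})=\widetilde{\boldsymbol{\gamma}}_t(\boldsymbol{\alpha}_t(\boldsymbol{\phi}),\boldsymbol{\beta}_t(\boldsymbol{\phi}))$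 and $\boldsymbol{\xi}_t(\boldsymbol{\phi})=\widetilde{\boldsymbol{\xi}}_t(\boldsymbol{\alpha}_{t-1}(\boldsymbol{\phi}),\boldsymbol{\beta}_t(\boldsymbol{\phi}),\boldsymbol{\phi})$ (these are the smoothed state and transition probabilities); $\boldsymbol{\gamma}(\boldsymbol{\phi}),\boldsymbol{\xi}(\boldsymbol{\phi})$ denote the collections over $t$. Objective: $F_t(\boldsymbol{\phi}\mid\boldsymbol{\gamma}_t,\boldsymbol{\xi}_t)=-\Big[\mathbb{1}\{t=1\}\sum_i\gamma_1(i)\log\delta_i(\boldsymbol{\eta})+\mathbb{1}\{t\ge2\}\sum_{i,j}\xi_t(i,j)\log\Gamma_{ij}(\boldsymbol{\eta})+\sum_i\gamma_t(i)\log f^{(i)}(y_t;\boldsymbol{\theta})\Big]$ and $F(\boldsymbol{\phi}\mid\boldsymbol{\gamma},\boldsymbol{\xi})=\frac1T\sum_{t=1}^TF_t(\boldsymbol{\phi}\mid\boldsymbol{\gamma}_t,\boldsymbol{\xi}_t)$, i.e. $-1/T$ times the EM expected complete-data log-likelihood; gradients are with respect to $\boldsymbol{\phi}$. Procedure $\texttt{VRSO-PE}(\{\widehat{\boldsymbol{\alpha}}^{(0)}_t,\widehat{\boldsymbol{\beta}}^{(0)}_t,\widehat{\boldsymbol{\gamma}}^{(0)}_t,\widehat{\boldsymbol{\xi}}^{(0)}_t\}_{t=1}^T,\boldsymbol{\phi}^{(0)},\lambda,A,P,M)$: initialize gradient tables $\widehat\nabla F^{(0)}_t=\nabla F_t(\boldsymbol{\phi}^{(0)}\mid\widehat{\boldsymbol{\gamma}}^{(0)}_t,\widehat{\boldsymbol{\xi}}^{(0)}_t)$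 and $\widehat\nabla F^{(0)}=\frac1T\sum_t\widehat\nabla F^{(0)}_t$. For $m=0,\ldots,M-1$: draw $t_m$ uniformly from $\{1,\ldots,T\}$. If $P=\texttt{True}$, set $\widehat{\boldsymbol{\alpha}}^{(m+1)}_{t_m}=\widetilde{\boldsymbol{\alpha}}_{t_m}(\widehat{\boldsymbol{\alpha}}^{(m)}_{t_m-1},\boldsymbol{\phi}^{(m)})$, $\widehat{\boldsymbol{\beta}}^{(m+1)}_{t_m}=\widetilde{\boldsymbol{\beta}}_{t_m}(\widehat{\boldsymbol{\beta}}^{(m)}_{t_m+1},\boldsymbol{\phi}^{(m)})$, $\widehat{\boldsymbol{\gamma}}^{(m+1)}_{t_m}=\widetilde{\boldsymbol{\gamma}}_{t_m}(\widehat{\boldsymbol{\alpha}}^{(m+1)}_{t_m},\widehat{\boldsymbol{\beta}}^{(m+1)}_{t_m})$, $\widehat{\boldsymbol{\xi}}^{(m+1)}_{t_m}=\widetilde{\boldsymbol{\xi}}_{t_m}(\widehat{\boldsymbol{\alpha}}^{(m+1)}_{t_m-1},\widehat{\boldsymbol{\beta}}^{(m+1)}_{t_m},\boldsymbol{\phi}^{(m)})$; all other entries (and all entries if $P=\texttt{False}$) are copied unchanged from step $m$. Then $\boldsymbol{\phi}^{(m+1)}=\boldsymbol{\phi}^{(m)}-\lambda\big[\nabla F_{t_m}(\boldsymbol{\phi}^{(m)}\mid\widehat{\boldsymbol{\gamma}}^{(m+1)}_{t_m},\widehat{\boldsymbol{\xi}}^{(m+1)}_{t_m})-\widehat\nabla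 F^{(m)}_{t_m}+\widehat\nabla F^{(m)}\big]$. If $A=\mathrm{SAGA}$: $\widehat\nabla F^{(m+1)}_{t_m}=\nabla F_{t_m}(\boldsymbol{\phi}^{(m)}\mid\widehat{\boldsymbol{\gamma}}^{(m+1)}_{t_m},\widehat{\boldsymbol{\xi}}^{(m+1)}_{t_m})$, $\widehat\nabla F^{(m+1)}=\widehat\nabla F^{(m)}+\frac1T(\widehat\nabla F^{(m+1)}_{t_m}-\widehat\nabla F^{(m)}_{t_m})$, other table entries unchanged; if $A=\mathrm{SVRG}$ the gradient tables are left unchanged. The output is $\boldsymbol{\phi}^{(M)}$. *)

theory Defs
  imports "HOL-Analysis.Analysis" "HOL-Probability.Probability"
begin

text \<open>States are indexed 0..<N, time 1..T.
  Row vectors are functions nat => real (only entries < N matter), matrices nat => nat => real.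
  The parameter is phi = (theta, eta). dl eta i = delta_i(eta), Gm eta i j = Gamma_ij(eta),
  f i y theta = f^(i)(y; theta), y t = observation at time t.\<close>

definition alpha_tl :: "nat \<Rightarrow> ('et \<Rightarrow> nat \<Rightarrow> real) \<Rightarrow> ('et \<Rightarrow> nat \<Rightarrow> nat \<Rightarrow> real)
   \<Rightarrow> (nat \<Rightarrow> 'y \<Rightarrow> 'th \<Rightarrow> real) \<Rightarrow> (nat \<Rightarrow> 'y) \<Rightarrow> nat \<Rightarrow> (nat \<Rightarrow> real) \<Rightarrow> 'th \<times> 'et \<Rightarrow> nat \<Rightarrow> real" where
  "alpha_tl N dl Gm f y t a phi =
     (if t = 1 then (\<lambda>j. dl (snd phi) j * f j (y 1) (fst phi))
      else (\<lambda>j. (\<Sum>i<N. a i * Gm (snd phi) i j) * f j (y t) (fst phi)))"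

fun alpha :: "nat \<Rightarrow> ('et \<Rightarrow> nat \<Rightarrow> real) \<Rightarrow> ('et \<Rightarrow> nat \<Rightarrow> nat \<Rightarrow> real)
   \<Rightarrow> (nat \<Rightarrow> 'y \<Rightarrow> 'th \<Rightarrow> real) \<Rightarrow> (nat \<Rightarrow> 'y) \<Rightarrow> 'th \<times> 'et \<Rightarrow> nat \<Rightarrow> nat \<Rightarrow> real" where
  "alpha N dl Gm f y phi 0 = (\<lambda>_. 0)"
| "alpha N dl Gm f y phi (Suc t) = alpha_tl N dl Gm f y (Suc t) (alpha N dl Gm f y phi t) phi"

definition beta_tl :: "nat \<Rightarrow> nat \<Rightarrow> ('et \<Rightarrow> nat \<Rightarrow> nat \<Rightarrow> real)
   \<Rightarrow> (nat \<Rightarrow> 'y \<Rightarrow> 'th \<Rightarrow> real) \<Rightarrow> (nat \<Rightarrow> 'y) \<Rightarrow> nat \<Rightarrow> (nat \<Rightarrow> real) \<Rightarrow> 'th \<times> 'et \<Rightarrow> nat \<Rightarrow> real" where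
  "beta_tl N T Gm f y t b phi =
     (if t = T then (\<lambda>_. 1)
      else (\<lambda>i. \<Sum>j<N. Gm (snd phi) i j * f j (y (t + 1)) (fst phi) * b j))"

text \<open>betaR k = beta_{T-k}\<close>
fun betaR :: "nat \<Rightarrow> nat \<Rightarrow> ('et \<Rightarrow> nat \<Rightarrow> nat \<Rightarrow> real)
   \<Rightarrow> (nat \<Rightarrow> 'y \<Rightarrow> 'th \<Rightarrow> real) \<Rightarrow> (nat \<Rightarrow> 'y) \<Rightarrow> 'th \<times> 'et \<Rightarrow> nat \<Rightarrow> nat \<Rightarrow> real" where
  "betaR N T Gm f y phi 0 = (\<lambda>_. 1)"
| "betaR N T Gm f y phi (Suc k) = beta_tl N T Gm f y (T - Suc k) (betaR N T Gm f y phi k) phi"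

definition beta :: "nat \<Rightarrow> nat \<Rightarrow> ('et \<Rightarrow> nat \<Rightarrow> nat \<Rightarrow> real)
   \<Rightarrow> (nat \<Rightarrow> 'y \<Rightarrow> 'th \<Rightarrow> real) \<Rightarrow> (nat \<Rightarrow> 'y) \<Rightarrow> 'th \<times> 'et \<Rightarrow> nat \<Rightarrow> nat \<Rightarrow> real" where
  "beta N T Gm f y phi t = betaR N T Gm f y phi (T - t)"

definition gamma_tl :: "nat \<Rightarrow> (nat \<Rightarrow> real) \<Rightarrow> (nat \<Rightarrow> real) \<Rightarrow> nat \<Rightarrow> real" where
  "gamma_tl N a b = (\<lambda>i. a i * b i / (\<Sum>j<N. a j * b j))"

definition xi_tl :: "nat \<Rightarrow> ('et \<Rightarrow> nat \<Rightarrow> nat \<Rightarrow> real)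
   \<Rightarrow> (nat \<Rightarrow> 'y \<Rightarrow> 'th \<Rightarrow> real) \<Rightarrow> (nat \<Rightarrow> 'y) \<Rightarrow> nat \<Rightarrow> (nat \<Rightarrow> real) \<Rightarrow> (nat \<Rightarrow> real)
   \<Rightarrow> 'th \<times> 'et \<Rightarrow> nat \<Rightarrow> nat \<Rightarrow> real" where
  "xi_tl N Gm f y t a' b phi =
     (\<lambda>i j. a' i * Gm (snd phi) i j * f j (y t) (fst phi) * b j /
        (\<Sum>k<N. \<Sum>l<N. a' k * Gm (snd phi) k l * f l (y t) (fst phi) * b l))"

definition gamma where
  "gamma N T dl Gm f y phi t = gamma_tl N (alpha N dl Gm f y phi t) (beta N T Gm f y phi t)"

definition xi where
  "xi N T dl Gm f y phi t = xi_tl N Gm f y t (alpha N dl Gm f y phi (t - 1)) (beta N T Gm f y phi t) phi"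

definition Ft :: "nat \<Rightarrow> ('et \<Rightarrow> nat \<Rightarrow> real) \<Rightarrow> ('et \<Rightarrow> nat \<Rightarrow> nat \<Rightarrow> real)
   \<Rightarrow> (nat \<Rightarrow> 'y \<Rightarrow> 'th \<Rightarrow> real) \<Rightarrow> (nat \<Rightarrow> 'y) \<Rightarrow> nat \<Rightarrow> 'th \<times> 'et
   \<Rightarrow> (nat \<Rightarrow> real) \<Rightarrow> (nat \<Rightarrow> nat \<Rightarrow> real) \<Rightarrow> real" where
  "Ft N dl Gm f y t phi g x =
     - ((if t = 1 then (\<Sum>i<N. g i * ln (dl (snd phi) i)) else 0)
        + (if t \<ge> 2 then (\<Sum>i<N. \<Sum>j<N. x i j * ln (Gm (snd phi) i j)) else 0)
        + (\<Sum>i<N. g i * ln (f i (y t) (fst phi))))"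

definition Fobj where
  "Fobj N T dl Gm f y phi G X = (1 / real T) * (\<Sum>t=1..T. Ft N dl Gm f y t phi (G t) (X t))"

definition grad :: "('p::real_inner \<Rightarrow> real) \<Rightarrow> 'p \<Rightarrow> 'p" where
  "grad h x = (SOME v. (h has_derivative (\<lambda>d. inner v d)) (at x))"

definition gFt where
  "gFt N dl Gm f y t phi g x = grad (\<lambda>psi. Ft N dl Gm f y t psi g x) phi"

datatype alg = SAGA | SVRG

record 'p vstate =
  phi :: 'p
  ah :: "nat \<Rightarrow> nat \<Rightarrow> real"
  bh :: "nat \<Rightarrow> nat \<Rightarrow> real"
  gh :: "nat \<Rightarrow> nat \<Rightarrow> real"
  xh :: "nat \<Rightarrow> nat \<Rightarrow> nat \<Rightarrow> real"
  tab :: "nat \<Rightarrow> 'p"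
  avg :: 'p

definition vrso_init where
  "vrso_init N T dl Gm f y A0 B0 G0 X0 phi0 =
     \<lparr>phi = phi0, ah = A0, bh = B0, gh = G0, xh = X0,
      tab = (\<lambda>t. gFt N dl Gm f y t phi0 (G0 t) (X0 t)),
      avg = (1 / real T) *\<^sub>R (\<Sum>t=1..T. gFt N dl Gm f y t phi0 (G0 t) (X0 t))\<rparr>"

text \<open>One iteration with sampled index tm. (The xi-entry is only refreshed when tm >= 2,
  since xi_1 is undefined and unused by F_1.)\<close>
definition vrso_step where
  "vrso_step N T dl Gm f y lam A P tm s =
     (let ph = phi s;
          a' = (if P then (ah s)(tm := alpha_tl N dl Gm f y tm (ah s (tm - 1)) ph) else ah s);
          b' = (if P then (bh s)(tm := beta_tl N T Gm f y tm (bh s (tm + 1)) ph) else bh s);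
          g' = (if P then (gh s)(tm := gamma_tl N (a' tm) (b' tm)) else gh s);
          x' = (if P \<and> tm \<ge> 2 then (xh s)(tm := xi_tl N Gm f y tm (a' (tm - 1)) (b' tm) ph) else xh s);
          gnew = gFt N dl Gm f y tm ph (g' tm) (x' tm);
          ph' = ph - lam *\<^sub>R (gnew - tab s tm + avg s)
      in if A = SAGA then
           \<lparr>phi = ph', ah = a', bh = b', gh = g', xh = x',
            tab = (tab s)(tm := gnew), avg = avg s + (1 / real T) *\<^sub>R (gnew - tab s tm)\<rparr>
         else
           \<lparr>phi = ph', ah = a', bh = b', gh = g', xh = x', tab = tab s, avg = avg s\<rparr>)"

fun vrso_run where
  "vrso_run N T dl Gm f y A0 B0 G0 X0 phi0 lam A P ts 0 = vrso_init N T dl Gm f y A0 B0 G0 X0 phi0"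
| "vrso_run N T dl Gm f y A0 B0 G0 X0 phi0 lam A P ts (Suc m) =
     vrso_step N T dl Gm f y lam A P (ts m) (vrso_run N T dl Gm f y A0 B0 G0 X0 phi0 lam A P ts m)"

text \<open>VRSO-PE output phi^(M), given the sequence ts of sampled indices t_0, t_1, ...\<close>
definition vrso_pe where
  "vrso_pe N T dl Gm f y A0 B0 G0 X0 phi0 lam A P M ts =
     phi (vrso_run N T dl Gm f y A0 B0 G0 X0 phi0 lam A P ts M)"

end

theory Submission
  imports Defs
begin

lemma AE_range:
  assumes "T \<ge> (1::nat)"
  shows "AE ts in PiM UNIV (\<lambda>_. measure_pmf (pmf_of_set {1..T})). \<forall>m::nat. ts m \<in> {1..T}"
proof -
  have "\<forall>m::nat. AE ts in PiM UNIV (\<lambda>_. measure_pmf (pmf_of_set {1..T})). ts m \<in> {1..T}"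
  proof
    fix m :: nat
    have "{1..T} \<noteq> {}" using assms by simp
    then have "AE x in measure_pmf (pmf_of_set {1..T}). x \<in> {1..T}"
      by (simp add: AE_measure_pmf_iff)
    then show "AE ts in PiM UNIV (\<lambda>_. measure_pmf (pmf_of_set {1..T})). ts m \<in> {1..T}"
      using AE_PiM_component[of UNIV "\<lambda>_. measure_pmf (pmf_of_set {1..T})" m "\<lambda>x. x \<in> {1..T}"]
      by (simp add: prob_space_measure_pmf)
  qed
  then show ?thesis by (rule iffD2[OF AE_all_countable[where P="\<lambda>m ts. ts m \<in> {1..T}"]])
qed


lemma bl_inner:
  fixes D :: "'p::euclidean_space \<Rightarrow> real"
  assumes "bounded_linear D"
  shows "D = (\<lambda>d. inner (\<Sum>b\<in>Basis. D b *\<^sub>R b) d)"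
proof
  fix d :: 'p
  interpret L: bounded_linear D by fact
  have "D d = D (\<Sum>b\<in>Basis. (d \<bullet> b) *\<^sub>R b)" by (simp add: euclidean_representation)
  also have "\<dots> = (\<Sum>b\<in>Basis. (d \<bullet> b) * D b)" by (simp add: L.sum L.scale)
  also have "\<dots> = inner (\<Sum>b\<in>Basis. D b *\<^sub>R b) d" by (simp add: inner_sum_right inner_commute mult.commute)
  finally show "D d = inner (\<Sum>b\<in>Basis. D b *\<^sub>R b) d" .
qed

lemma grad_eqI:
  fixes h :: "'p::real_inner \<Rightarrow> real"
  assumes "(h has_derivative (\<lambda>d. inner v d)) (at x)"
  shows "grad h x = v"
proof -
  have "(h has_derivative (\<lambda>d. inner (grad h x) d)) (at x)"
    unfolding grad_def by (rule someI[of _ v]) (rule assms)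
  then have "(\<lambda>d. inner (grad h x) d) = (\<lambda>d. inner v d)"
    using assms by (rule has_derivative_unique)
  then have "inner (grad h x) (grad h x - v) = inner v (grad h x - v)" by metis
  then have "inner (grad h x - v) (grad h x - v) = 0" by (simp add: inner_diff_left)
  then show ?thesis by simp
qed

lemma diff_grad:
  fixes h :: "'p::euclidean_space \<Rightarrow> real"
  assumes "h differentiable (at x)"
  shows "(h has_derivative (\<lambda>d. inner (grad h x) d)) (at x)"
proof -
  obtain D where D: "(h has_derivative D) (at x)" using assms unfolding differentiable_def by blast
  then have "bounded_linear D" by (rule has_derivative_bounded_linear)
  then have eq: "D = (\<lambda>d. inner (\<Sum>b\<in>Basis. D b *\<^sub>R b) d)" by (rule bl_inner)
  with D have "(h has_derivative (\<lambda>d. inner (\<Sum>b\<in>Basis. D b *\<^sub>R b) d)) (at x)" by simp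
  moreover then have "grad h x = (\<Sum>b\<in>Basis. D b *\<^sub>R b)" by (rule grad_eqI)
  ultimately show ?thesis by simp
qed

lemma ln_comp_diff:
  fixes u :: "'a::real_normed_vector \<Rightarrow> real"
  assumes "u differentiable (at p)" "u p > 0"
  shows "(\<lambda>z. ln (u z)) differentiable (at p)"
proof -
  obtain D where "(u has_derivative D) (at p)" using assms(1) unfolding differentiable_def by blast
  then have "((\<lambda>z. ln (u z)) has_derivative (\<lambda>h. D h * inverse (u p))) (at p)"
    using assms(2) by (auto intro!: derivative_eq_intros)
  then show ?thesis unfolding differentiable_def by blast
qed

lemma if_diff:
  "(c \<Longrightarrow> F differentiable G) \<Longrightarrow> (\<lambda>x. if c then F x else (0::real)) differentiable G"
  by (cases c) auto

lemma Ft_diff: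
  fixes p :: "'th::euclidean_space \<times> 'et::euclidean_space"
  assumes dl: "\<And>i. i < N \<Longrightarrow> dl (snd p) i > 0 \<and> (\<lambda>e. dl e i) differentiable (at (snd p))"
    and Gm: "\<And>i j. i < N \<Longrightarrow> j < N \<Longrightarrow> Gm (snd p) i j > 0 \<and> (\<lambda>e. Gm e i j) differentiable (at (snd p))"
    and f: "\<And>i. i < N \<Longrightarrow> f i (y t) (fst p) > 0 \<and> (\<lambda>h. f i (y t) h) differentiable (at (fst p))"
  shows "(\<lambda>psi. Ft N dl Gm f y t psi g x) differentiable (at p)"
proof -
  have snd_d: "snd differentiable (at p)" 
    unfolding differentiable_def using has_derivative_snd[OF has_derivative_ident] by blast
  have fst_d: "fst differentiable (at p)" 
    unfolding differentiable_def using has_derivative_fst[OF has_derivative_ident] by blast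
  have a: "(\<lambda>psi. ln (dl (snd psi) i)) differentiable (at p)" if "i < N" for i
    using differentiable_compose[of "\<lambda>e. ln (dl e i)" snd p UNIV] ln_comp_diff[of "\<lambda>e. dl e i" "snd p"] dl[OF that] snd_d
    by simp
  have b: "(\<lambda>psi. ln (Gm (snd psi) i j)) differentiable (at p)" if "i < N" "j < N" for i j
    using differentiable_compose[of "\<lambda>e. ln (Gm e i j)" snd p UNIV] ln_comp_diff[of "\<lambda>e. Gm e i j" "snd p"] Gm[OF that] snd_d
    by simp
  have c: "(\<lambda>psi. ln (f i (y t) (fst psi))) differentiable (at p)" if "i < N" for i
    using differentiable_compose[of "\<lambda>h. ln (f i (y t) h)" fst p UNIV] ln_comp_diff[of "\<lambda>h. f i (y t) h" "fst p"] f[OF that] fst_d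
    by simp
  show ?thesis unfolding Ft_def
    by (intro differentiable_minus differentiable_add differentiable_sum ballI differentiable_mult differentiable_const if_diff)
       (auto intro: a b c)
qed

lemma Ft_cong:
  assumes "\<And>i. i < N \<Longrightarrow> g i = g' i" "t \<ge> 2 \<Longrightarrow> (\<And>i j. i < N \<Longrightarrow> j < N \<Longrightarrow> x i j = x' i j)"
  shows "Ft N dl Gm f y t psi g x = Ft N dl Gm f y t psi g' x'"
  unfolding Ft_def using assms by (auto intro!: sum.cong)

lemma gFt_cong:
  assumes "\<And>i. i < N \<Longrightarrow> g i = g' i" "t \<ge> 2 \<Longrightarrow> (\<And>i j. i < N \<Longrightarrow> j < N \<Longrightarrow> x i j = x' i j)"
  shows "gFt N dl Gm f y t psi g x = gFt N dl Gm f y t psi g' x'"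
proof -
  have "(\<lambda>psi. Ft N dl Gm f y t psi g x) = (\<lambda>psi. Ft N dl Gm f y t psi g' x')"
    by (rule ext, rule Ft_cong) (use assms in auto)
  then show ?thesis unfolding gFt_def by simp
qed

lemma alpha_rec: "t \<ge> 1 \<Longrightarrow> alpha N dl Gm f y p t = alpha_tl N dl Gm f y t (alpha N dl Gm f y p (t - 1)) p"
  by (cases t) auto

lemma beta_rec:
  assumes "t \<le> T"
  shows "beta N T Gm f y p t = beta_tl N T Gm f y t (beta N T Gm f y p (t + 1)) p"
proof (cases "t = T")
  case True
  then show ?thesis by (simp add: beta_def beta_tl_def)
next
  case False
  then have e: "T - t = Suc (T - (t + 1))" using assms by simp
  have "T - Suc (T - (t + 1)) = t" using assms False by simp
  then show ?thesis unfolding beta_def e by simp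
qed

lemma alpha_tl_cong:
  assumes "t \<noteq> 1 \<Longrightarrow> (\<And>i. i < N \<Longrightarrow> a i = a0 i)"
  shows "alpha_tl N dl Gm f y t a p j = alpha_tl N dl Gm f y t a0 p j"
  unfolding alpha_tl_def using assms by (auto intro!: sum.cong)

lemma beta_tl_cong:
  assumes "t \<noteq> T \<Longrightarrow> (\<And>i. i < N \<Longrightarrow> b i = b0 i)"
  shows "beta_tl N T Gm f y t b p j = beta_tl N T Gm f y t b0 p j"
  unfolding beta_tl_def using assms by (auto intro!: sum.cong)

lemma gamma_tl_cong:
  assumes "\<And>i. i < N \<Longrightarrow> a i = a0 i" "\<And>i. i < N \<Longrightarrow> b i = b0 i" "i < N"
  shows "gamma_tl N a b i = gamma_tl N a0 b0 i"
  unfolding gamma_tl_def using assms by (auto intro!: sum.cong)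

lemma xi_tl_cong:
  assumes "\<And>i. i < N \<Longrightarrow> a i = a0 i" "\<And>i. i < N \<Longrightarrow> b i = b0 i" "i < N" "j < N"
  shows "xi_tl N Gm f y t a b p i j = xi_tl N Gm f y t a0 b0 p i j"
  unfolding xi_tl_def using assms by (auto intro!: sum.cong)


theorem lemma6:
  fixes N T :: nat
    and y :: "nat \<Rightarrow> 'y"
    and dl :: "'et::euclidean_space \<Rightarrow> nat \<Rightarrow> real"
    and Gm :: "'et \<Rightarrow> nat \<Rightarrow> nat \<Rightarrow> real"
    and f :: "nat \<Rightarrow> 'y \<Rightarrow> 'th::euclidean_space \<Rightarrow> real"
    and Phi :: "('th \<times> 'et) set"
    and phi0 :: "'th \<times> 'et"
    and A0 B0 G0 :: "nat \<Rightarrow> nat \<Rightarrow> real"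
    and X0 :: "nat \<Rightarrow> nat \<Rightarrow> nat \<Rightarrow> real"
  assumes N: "N \<ge> 1" and T: "T \<ge> 1"
    and Phi_open: "open Phi" and phi0_in: "phi0 \<in> Phi"
    and dl_pos: "\<And>th et i. (th, et) \<in> Phi \<Longrightarrow> i < N \<Longrightarrow> dl et i > 0"
    and dl_sum: "\<And>th et. (th, et) \<in> Phi \<Longrightarrow> (\<Sum>i<N. dl et i) = 1"
    and Gm_pos: "\<And>th et i j. (th, et) \<in> Phi \<Longrightarrow> i < N \<Longrightarrow> j < N \<Longrightarrow> Gm et i j > 0"
    and Gm_sum: "\<And>th et i. (th, et) \<in> Phi \<Longrightarrow> i < N \<Longrightarrow> (\<Sum>j<N. Gm et i j) = 1"
    and f_pos: "\<And>th et i yy. (th, et) \<in> Phi \<Longrightarrow> i < N \<Longrightarrow> f i yy th > 0"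
    and dl_diff: "\<And>th et i. (th, et) \<in> Phi \<Longrightarrow> i < N \<Longrightarrow> (\<lambda>e. dl e i) differentiable (at et)"
    and Gm_diff: "\<And>th et i j. (th, et) \<in> Phi \<Longrightarrow> i < N \<Longrightarrow> j < N \<Longrightarrow>
                    (\<lambda>e. Gm e i j) differentiable (at et)"
    and f_diff: "\<And>th et i yy. (th, et) \<in> Phi \<Longrightarrow> i < N \<Longrightarrow> (\<lambda>h. f i yy h) differentiable (at th)"
    and h1: "\<And>t i. t \<in> {1..T} \<Longrightarrow> i < N \<Longrightarrow>
               A0 t i = alpha N dl Gm f y phi0 t i \<and> B0 t i = beta N T Gm f y phi0 t i"
    and h2: "\<And>t i. t \<in> {1..T} \<Longrightarrow> i < N \<Longrightarrow> G0 t i = gamma N T dl Gm f y phi0 t i"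
    and h2': "\<And>t i j. t \<in> {2..T} \<Longrightarrow> i < N \<Longrightarrow> j < N \<Longrightarrow> X0 t i j = xi N T dl Gm f y phi0 t i j"
    and h3: "grad (\<lambda>ph. Fobj N T dl Gm f y ph (gamma N T dl Gm f y phi0) (xi N T dl Gm f y phi0)) phi0 = 0"
  shows "AE ts in PiM UNIV (\<lambda>_. measure_pmf (pmf_of_set {1..T})).
           \<forall>lam A P M. vrso_pe N T dl Gm f y A0 B0 G0 X0 phi0 lam A P M ts = phi0"
proof -
  let ?S = "{1..T}"
  define al where "al = alpha N dl Gm f y phi0"
  define be where "be = beta N T Gm f y phi0"
  define ga where "ga = gamma N T dl Gm f y phi0"
  define xx where "xx = xi N T dl Gm f y phi0"
  define v where "v = (\<lambda>t. gFt N dl Gm f y t phi0 (ga t) (xx t))"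
  have p0: "(fst phi0, snd phi0) \<in> Phi" using phi0_in by simp
  have dH: "((\<lambda>ps. Ft N dl Gm f y t ps (ga t) (xx t)) has_derivative (\<lambda>d. inner (v t) d)) (at phi0)" for t
    unfolding v_def gFt_def
    by (rule diff_grad, rule Ft_diff)
       (use dl_pos[OF p0] dl_diff[OF p0] Gm_pos[OF p0] Gm_diff[OF p0] f_pos[OF p0] f_diff[OF p0] in auto)
  have dF: "((\<lambda>ph. Fobj N T dl Gm f y ph ga xx) has_derivative
      (\<lambda>d. inner ((1 / real T) *\<^sub>R (\<Sum>t=1..T. v t)) d)) (at phi0)"
  proof -
    have "((\<lambda>ph. (1 / real T) * (\<Sum>t=1..T. Ft N dl Gm f y t ph (ga t) (xx t))) has_derivative
      (\<lambda>d. (1 / real T) * (\<Sum>t=1..T. inner (v t) d))) (at phi0)"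
      by (intro has_derivative_mult_right has_derivative_sum dH)
    then show ?thesis unfolding Fobj_def by (simp add: inner_sum_left)
  qed
  have avg0: "(1 / real T) *\<^sub>R (\<Sum>t=1..T. v t) = 0"
    using grad_eqI[OF dF] h3 unfolding ga_def xx_def by simp
  have tab0: "gFt N dl Gm f y t phi0 (G0 t) (X0 t) = v t" if "t \<in> ?S" for t
    unfolding v_def
    by (rule gFt_cong) (use that h2 h2' in \<open>auto simp: ga_def xx_def\<close>)
  define inv where "inv s \<longleftrightarrow> phi s = phi0 \<and> avg s = 0 \<and> (\<forall>t\<in>?S. tab s t = v t)
      \<and> (\<forall>t\<in>?S. \<forall>i<N. ah s t i = al t i \<and> bh s t i = be t i \<and> gh s t i = ga t i)
      \<and> (\<forall>t\<in>{2..T}. \<forall>i<N. \<forall>j<N. xh s t i j = xx t i j)" for s :: "('th \<times> 'et) vstate"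
  have inv0: "inv (vrso_init N T dl Gm f y A0 B0 G0 X0 phi0)"
  proof -
    have "(\<Sum>t=1..T. gFt N dl Gm f y t phi0 (G0 t) (X0 t)) = (\<Sum>t=1..T. v t)"
      by (rule sum.cong) (auto simp: tab0)
    then show ?thesis unfolding inv_def vrso_init_def
      using avg0 tab0 h1 h2 h2' by (auto simp: al_def be_def ga_def xx_def)
  qed
  have step: "inv (vrso_step N T dl Gm f y lam A P tm s)" if I: "inv s" and tm: "tm \<in> ?S" for s lam A P tm
  proof -
    have ph: "phi s = phi0" using I by (simp add: inv_def)
    define a' where "a' = (if P then (ah s)(tm := alpha_tl N dl Gm f y tm (ah s (tm - 1)) (phi s)) else ah s)"
    define b' where "b' = (if P then (bh s)(tm := beta_tl N T Gm f y tm (bh s (tm + 1)) (phi s)) else bh s)"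
    define g' where "g' = (if P then (gh s)(tm := gamma_tl N (a' tm) (b' tm)) else gh s)"
    define x' where "x' = (if P \<and> tm \<ge> 2 then (xh s)(tm := xi_tl N Gm f y tm (a' (tm - 1)) (b' tm) (phi s)) else xh s)"
    define gnew where "gnew = gFt N dl Gm f y tm (phi s) (g' tm) (x' tm)"
    have A': "\<forall>t\<in>?S. \<forall>i<N. a' t i = al t i"
    proof (intro ballI allI impI)
      fix t i assume t: "t \<in> ?S" and i: "i < N"
      show "a' t i = al t i"
      proof (cases "P \<and> t = tm")
        case True
        have "alpha_tl N dl Gm f y tm (ah s (tm - 1)) phi0 i = alpha_tl N dl Gm f y tm (al (tm - 1)) phi0 i"
        proof (rule alpha_tl_cong)
          fix k assume "tm \<noteq> 1" "k < N"
          then have "tm - 1 \<in> ?S" "k < N" using tm by auto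
          then show "ah s (tm - 1) k = al (tm - 1) k" using I unfolding inv_def by blast
        qed
        also have "\<dots> = al tm i" using alpha_rec[of tm N dl Gm f y phi0] tm by (simp add: al_def)
        finally show ?thesis using True ph by (simp add: a'_def)
      next
        case False
        then show ?thesis using I t i by (auto simp: a'_def inv_def)
      qed
    qed
    have B': "\<forall>t\<in>?S. \<forall>i<N. b' t i = be t i"
    proof (intro ballI allI impI)
      fix t i assume t: "t \<in> ?S" and i: "i < N"
      show "b' t i = be t i"
      proof (cases "P \<and> t = tm")
        case True
        have "beta_tl N T Gm f y tm (bh s (tm + 1)) phi0 i = beta_tl N T Gm f y tm (be (tm + 1)) phi0 i"
          by (rule beta_tl_cong) (use I tm in \<open>auto simp: inv_def\<close>)
        also have "\<dots> = be tm i" using beta_rec[of tm T N Gm f y phi0] tm by (simp add: be_def)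
        finally show ?thesis using True ph by (simp add: b'_def)
      next
        case False
        then show ?thesis using I t i by (auto simp: b'_def inv_def)
      qed
    qed
    have G': "\<forall>t\<in>?S. \<forall>i<N. g' t i = ga t i"
    proof (intro ballI allI impI)
      fix t i assume t: "t \<in> ?S" and i: "i < N"
      show "g' t i = ga t i"
      proof (cases "P \<and> t = tm")
        case True
        have "gamma_tl N (a' tm) (b' tm) i = gamma_tl N (al tm) (be tm) i"
          by (rule gamma_tl_cong) (use A' B' tm i in auto)
        then show ?thesis using True by (simp add: g'_def ga_def gamma_def al_def be_def)
      next
        case False
        then show ?thesis using I t i by (auto simp: g'_def inv_def)
      qed
    qed
    have X': "\<forall>t\<in>{2..T}. \<forall>i<N. \<forall>j<N. x' t i j = xx t i j"
    proof (intro ballI allI impI)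
      fix t i j assume t: "t \<in> {2..T}" and i: "i < N" and j: "j < N"
      show "x' t i j = xx t i j"
      proof (cases "P \<and> tm \<ge> 2 \<and> t = tm")
        case True
        have "xi_tl N Gm f y tm (a' (tm - 1)) (b' tm) phi0 i j = xi_tl N Gm f y tm (al (tm - 1)) (be tm) phi0 i j"
        proof (rule xi_tl_cong)
          have "tm - 1 \<in> ?S" using tm True by auto
          then show "\<And>k. k < N \<Longrightarrow> a' (tm - 1) k = al (tm - 1) k" using A' by blast
          show "\<And>k. k < N \<Longrightarrow> b' tm k = be tm k" using B' tm by blast
        qed (use i j in auto)
        then show ?thesis using True ph by (simp add: x'_def xx_def xi_def al_def be_def)
      next
        case False
        then show ?thesis using I t i j by (auto simp: x'_def inv_def)
      qed
    qed
    have gn: "gnew = v tm"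
      unfolding gnew_def ph v_def
      by (rule gFt_cong) (use G' X' tm in auto)
    have tb: "tab s tm = v tm" using I tm by (simp add: inv_def)
    have av: "avg s = 0" using I by (simp add: inv_def)
    have ph': "phi s - lam *\<^sub>R (gnew - tab s tm + avg s) = phi0" using gn tb av ph by simp
    show ?thesis
      unfolding vrso_step_def Let_def a'_def[symmetric] b'_def[symmetric] g'_def[symmetric]
        x'_def[symmetric] gnew_def[symmetric] ph'
      using A' B' G' X' I gn tb av unfolding inv_def by auto
  qed
  have run: "inv (vrso_run N T dl Gm f y A0 B0 G0 X0 phi0 lam A P ts M)"
    if "\<forall>m. ts m \<in> ?S" for ts lam A P M
    by (induction M) (use inv0 step that in auto)
  have "AE ts in PiM UNIV (\<lambda>_. measure_pmf (pmf_of_set {1..T})). \<forall>m::nat. ts m \<in> {1..T}"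
    by (rule AE_range[OF T])
  then show ?thesis
  proof (rule eventually_mono)
    fix ts :: "nat \<Rightarrow> nat" assume "\<forall>m. ts m \<in> {1..T}"
    then show "\<forall>lam A P M. vrso_pe N T dl Gm f y A0 B0 G0 X0 phi0 lam A P M ts = phi0"
      using run unfolding vrso_pe_def inv_def by blast
  qed
qed

end
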